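(* Let $(\Omega,\mathcal F,\mu)$ be a measure space with $\mu(\Omega)=\infty$, $p\in[1,\infty)$ and $k\ge1$. Then $\mathscr G_{p,k}$ is proximinal in $L^p(\Omega,\mathcal F,\mu)$. Moreover, let $f\in L^p$ and let $g=\sum_{i=1}^q b_i\mathbf 1_{A_i}$ be a minimizer with $q\le k$, $b_1<\dots<b_q$ real, $\{A_i\}_{1\le i\le q}$ a measurable partition of $\Omega$ with $\mu(A_i)>0$ for all $i$, and let $s$ be the unique index with $b_s=0$. Put $r_1=-\infty$, $r_{q+1}=+\infty$, $r_i=\frac{b_{i-1}+b_i}{2}$ for $2\le i\le q$ (so $r_s<0<r_{s+1}$), and $C_i=f^{-1}([r_i,r_{i+1}))$. Then $\mu(C_i)<\infty$ for $i\ne s$, for each $i\ne s$ with $\mu(C_i)>0$ the number $b_i$ is a $p$-th mean of $f$ on $C_i$, and $\tilde g=\sum_{i\ne s}\mathcal M_p(f,C_i)\mathbf 1_{C_i}+0\cdot\mathbf 1_{C_s}$ is a minimizer in $\mathscr G_{p,q}$. If $q$ is the smallest number of distinct values among all minimizers, then $\mu(C_i)>0$ for all $i$.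
   Context: $\mathscr G_{p,k}$ is the set of functions $\sum_{i=1}^l a_i\mathbf 1_{A_i}\in L^p$ with $l\le k$, $\{A_i\}$ a measurable partition of $\Omega$, $a_i\in\mathbb R$ (membership in $L^p$ forces $a_i=0$ when $\mu(A_i)=\infty$); $\mathscr D_{p,k}(f)=\inf\{\|f-h\|_p:\ h\in\mathscr G_{p,k}\}$; a minimizer is any $g\in\mathscr G_{p,k}$ with $\|f-g\|_p=\mathscr D_{p,k}(f)$. $p$-th mean: for measurable $A$ with $0<\mu(A)<\infty$, a $p$-th mean of $f$ on $A$ is any minimizer over $a\in\mathbb R$ of $\int_A|f-a|^p\,d\mu$; for $p>1$ it is unique and denoted $\mathcal M_p(f,A)$; for $p=1$ the minimizers form a bounded closed interval $[a^*,b^*]$ and $\mathcal M_1(f,A)=(a^*+b^* )/2$; if $\mu(A)=0$, $\mathcal M_p(f,A)=0$. *)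

theory Defs
  imports "HOL-Analysis.Analysis"
begin

definition memLp :: "'a measure \<Rightarrow> real \<Rightarrow> ('a \<Rightarrow> real) \<Rightarrow> bool" where
  "memLp M p f \<longleftrightarrow> f \<in> borel_measurable M \<and> integrable M (\<lambda>x. \<bar>f x\<bar> powr p)"

definition Lp_norm :: "'a measure \<Rightarrow> real \<Rightarrow> ('a \<Rightarrow> real) \<Rightarrow> real" where
  "Lp_norm M p f = (\<integral>x. \<bar>f x\<bar> powr p \<partial>M) powr (1 / p)"

definition Gpk :: "'a measure \<Rightarrow> real \<Rightarrow> nat \<Rightarrow> ('a \<Rightarrow> real) set" where
  "Gpk M p k = {h. memLp M p h \<and>
     (\<exists>l a A. l \<le> k \<and> (\<forall>i\<in>{1..l}. A i \<in> sets M) \<and> disjoint_family_on A {1..l}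
        \<and> (\<Union>i\<in>{1..l}. A i) = space M
        \<and> h = (\<lambda>x. \<Sum>i\<in>{1..l}. (a i :: real) * indicator (A i) x))}"

definition Dpk :: "'a measure \<Rightarrow> real \<Rightarrow> nat \<Rightarrow> ('a \<Rightarrow> real) \<Rightarrow> real" where
  "Dpk M p k f = (INF h\<in>Gpk M p k. Lp_norm M p (\<lambda>x. f x - h x))"

definition minimizer :: "'a measure \<Rightarrow> real \<Rightarrow> nat \<Rightarrow> ('a \<Rightarrow> real) \<Rightarrow> ('a \<Rightarrow> real) \<Rightarrow> bool" where
  "minimizer M p k f g \<longleftrightarrow> g \<in> Gpk M p k \<and> Lp_norm M p (\<lambda>x. f x - g x) = Dpk M p k f"

definition proximinal :: "'a measure \<Rightarrow> real \<Rightarrow> nat \<Rightarrow> bool" where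
  "proximinal M p k \<longleftrightarrow> (\<forall>f. memLp M p f \<longrightarrow> (\<exists>g. minimizer M p k f g))"

definition is_pth_mean :: "'a measure \<Rightarrow> real \<Rightarrow> ('a \<Rightarrow> real) \<Rightarrow> 'a set \<Rightarrow> real \<Rightarrow> bool" where
  "is_pth_mean M p f A a \<longleftrightarrow>
     (\<forall>c. (\<integral>x\<in>A. \<bar>f x - a\<bar> powr p \<partial>M) \<le> (\<integral>x\<in>A. \<bar>f x - c\<bar> powr p \<partial>M))"

definition Mp :: "'a measure \<Rightarrow> real \<Rightarrow> ('a \<Rightarrow> real) \<Rightarrow> 'a set \<Rightarrow> real" where
  "Mp M p f A =
     (if emeasure M A = 0 then 0
      else if p > 1 then (THE a. is_pth_mean M p f A a)
      else (Inf {a. is_pth_mean M p f A a} + Sup {a. is_pth_mean M p f A a}) / 2)"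

definition thr :: "nat \<Rightarrow> (nat \<Rightarrow> real) \<Rightarrow> nat \<Rightarrow> ereal" where
  "thr q b i = (if i \<le> 1 then -\<infinity> else if i \<ge> q + 1 then \<infinity>
                else ereal ((b (i - 1) + b i) / 2))"

definition Cset :: "'a measure \<Rightarrow> nat \<Rightarrow> (nat \<Rightarrow> real) \<Rightarrow> ('a \<Rightarrow> real) \<Rightarrow> nat \<Rightarrow> 'a set" where
  "Cset M q b f i = {x \<in> space M. thr q b i \<le> ereal (f x) \<and> ereal (f x) < thr q b (Suc i)}"

end

theory Submission
  imports Defs
begin


lemma powr_abs_add_le:
  fixes x y p :: real assumes "0 < p"
  shows "\<bar>x + y\<bar> powr p \<le> 2 powr p * (\<bar>x\<bar> powr p + \<bar>y\<bar> powr p)"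
proof -
  have "\<bar>x+y\<bar> \<le> 2 * max \<bar>x\<bar> \<bar>y\<bar>" by auto
  hence "\<bar>x+y\<bar> powr p \<le> (2 * max \<bar>x\<bar> \<bar>y\<bar>) powr p"
    by (intro powr_mono2) (use assms in auto)
  also have "\<dots> = 2 powr p * (max \<bar>x\<bar> \<bar>y\<bar>) powr p" by (simp add: powr_mult)
  also have "(max \<bar>x\<bar> \<bar>y\<bar>) powr p \<le> \<bar>x\<bar> powr p + \<bar>y\<bar> powr p" by (auto simp: max_def)
  finally show ?thesis by simp
qed

lemma powr_strict_mid:
  fixes a b p :: real assumes p: "1 < p" and a: "0 \<le> a" and ab: "a < b"
  shows "((a+b)/2) powr p < (a powr p + b powr p)/2"
proof -
  define m where "m = (a+b)/2"
  have m: "0 < m" "a < m" "m < b" using a ab by (simp_all add: m_def)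
  have mm: "b - m = m - a" by (simp add: m_def field_simps)
  have D: "\<And>x. 0 < x \<Longrightarrow> DERIV (\<lambda>x. x powr p) x :> p * x powr (p - 1)"
    by (rule has_real_derivative_powr)
  obtain z1 where z1: "m < z1" "z1 < b" "b powr p - m powr p = (b - m) * (p * z1 powr (p - 1))"
    using MVT2[of m b "\<lambda>x. x powr p" "\<lambda>x. p * x powr (p - 1)"] D m by force
  have lt: "m powr p - a powr p < b powr p - m powr p"
  proof (cases "a = 0")
    case True
    have "m powr p = m * m powr (p - 1)"
      using m by (simp add: powr_diff field_simps powr_one)
    also have "\<dots> < (b - m) * (p * z1 powr (p - 1))"
    proof -
      have "m powr (p-1) < z1 powr (p-1)" using z1 m p by (intro powr_less_mono2) auto
      also have "\<dots> \<le> p * z1 powr (p-1)" using p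
        by (intro mult_right_mono[of 1 p "z1 powr (p-1)", simplified]) auto
      finally show ?thesis using m True mm by (simp add: mult_strict_left_mono)
    qed
    finally show ?thesis using True z1 p by simp
  next
    case False
    obtain z2 where z2: "a < z2" "z2 < m" "m powr p - a powr p = (m - a) * (p * z2 powr (p - 1))"
      using MVT2[of a m "\<lambda>x. x powr p" "\<lambda>x. p * x powr (p - 1)"] D m a False by force
    have "z2 powr (p-1) < z1 powr (p-1)" using z1 z2 a p by (intro powr_less_mono2) auto
    hence "p * z2 powr (p-1) < p * z1 powr (p-1)" using p by simp
    thus ?thesis using z1(3) z2(3) m mm by (simp add: mult_strict_left_mono)
  qed
  thus ?thesis unfolding m_def[symmetric] by simp
qed

lemma abs_powr_strict_mid:
  fixes u v p :: real assumes p: "1 < p" and uv: "u \<noteq> v"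
  shows "\<bar>(u+v)/2\<bar> powr p < (\<bar>u\<bar> powr p + \<bar>v\<bar> powr p)/2"
proof -
  consider "\<bar>u\<bar> = \<bar>v\<bar>" | "\<bar>u\<bar> < \<bar>v\<bar>" | "\<bar>v\<bar> < \<bar>u\<bar>" by linarith
  then show ?thesis
  proof cases
    case 1
    then have "v = - u" "u \<noteq> 0" using uv by (auto simp: abs_if split: if_splits)
    then show ?thesis using 1 by simp
  next
    case 2
    have "\<bar>(u+v)/2\<bar> powr p \<le> ((\<bar>u\<bar>+\<bar>v\<bar>)/2) powr p" using p by (intro powr_mono2) auto
    also have "\<dots> < (\<bar>u\<bar> powr p + \<bar>v\<bar> powr p)/2" using 2 p by (intro powr_strict_mid) auto
    finally show ?thesis .
  next
    case 3
    have "\<bar>(u+v)/2\<bar> powr p \<le> ((\<bar>v\<bar>+\<bar>u\<bar>)/2) powr p" using p by (intro powr_mono2) auto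
    also have "\<dots> < (\<bar>v\<bar> powr p + \<bar>u\<bar> powr p)/2" using 3 p by (intro powr_strict_mid) auto
    finally show ?thesis by simp
  qed
qed




lemma integrable_powr_bound:
  fixes f g h :: "'a \<Rightarrow> real"
  assumes p: "0 < p" and f: "integrable M (\<lambda>x. \<bar>f x\<bar> powr p)" and g: "integrable M (\<lambda>x. \<bar>g x\<bar> powr p)"
    and h: "h \<in> borel_measurable M" and b: "\<And>x. x \<in> space M \<Longrightarrow> \<bar>h x\<bar> \<le> \<bar>f x\<bar> + \<bar>g x\<bar>"
  shows "integrable M (\<lambda>x. \<bar>h x\<bar> powr p)"
proof (rule Bochner_Integration.integrable_bound[where f="\<lambda>x. 2 powr p * (\<bar>f x\<bar> powr p + \<bar>g x\<bar> powr p)"])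
  show "integrable M (\<lambda>x. 2 powr p * (\<bar>f x\<bar> powr p + \<bar>g x\<bar> powr p))"
    by (rule integrable_mult_right, rule Bochner_Integration.integrable_add[OF f g])
  show "(\<lambda>x. \<bar>h x\<bar> powr p) \<in> borel_measurable M" using h by measurable
  show "AE x in M. norm (\<bar>h x\<bar> powr p) \<le> norm (2 powr p * (\<bar>f x\<bar> powr p + \<bar>g x\<bar> powr p))"
  proof (rule AE_I2)
    fix x assume x: "x \<in> space M"
    have "\<bar>h x\<bar> powr p \<le> (\<bar>f x\<bar> + \<bar>g x\<bar>) powr p" using b[OF x] p by (intro powr_mono2) auto
    also have "\<dots> = \<bar>\<bar>f x\<bar> + \<bar>g x\<bar>\<bar> powr p" by simp
    also have "\<dots> \<le> 2 powr p * (\<bar>\<bar>f x\<bar>\<bar> powr p + \<bar>\<bar>g x\<bar>\<bar> powr p)" by (rule powr_abs_add_le[OF p])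
    finally show "norm (\<bar>h x\<bar> powr p) \<le> norm (2 powr p * (\<bar>f x\<bar> powr p + \<bar>g x\<bar> powr p))" by simp
  qed
qed

lemma memLp_diff_int:
  fixes f g :: "'a \<Rightarrow> real"
  assumes p: "0 < p" and "memLp M p f" "memLp M p g"
  shows "integrable M (\<lambda>x. \<bar>f x - g x\<bar> powr p)"
proof (rule integrable_powr_bound[OF p, of M f "\<lambda>x. - g x"])
  show "integrable M (\<lambda>x. \<bar>f x\<bar> powr p)" "integrable M (\<lambda>x. \<bar>- g x\<bar> powr p)"
    using assms by (auto simp: memLp_def)
  show "(\<lambda>x. f x - g x) \<in> borel_measurable M" using assms by (auto simp: memLp_def)
qed auto

lemma meas_finite_of_const:
  fixes h :: "'a \<Rightarrow> real"
  assumes "memLp M p h" "0 < p" "S \<in> sets M" "\<And>x. x \<in> S \<Longrightarrow> h x = c" "c \<noteq> 0"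
  shows "emeasure M S < \<infinity>"
proof -
  have int: "integrable M (\<lambda>x. \<bar>h x\<bar> powr p)" using assms(1) by (simp add: memLp_def)
  have "ennreal (\<bar>c\<bar> powr p) * emeasure M S = (\<integral>\<^sup>+x. ennreal (\<bar>c\<bar> powr p) * indicator S x \<partial>M)"
    using nn_integral_cmult_indicator[OF assms(3)] by simp
  also have "\<dots> \<le> (\<integral>\<^sup>+x. ennreal (\<bar>h x\<bar> powr p) \<partial>M)"
    using assms(4) by (intro nn_integral_mono) (auto simp: indicator_def)
  also have "\<dots> < \<infinity>" using integrableD(2)[OF int] by (simp add: top.not_eq_extremum)
  finally have "ennreal (\<bar>c\<bar> powr p) * emeasure M S < \<infinity>" by simp
  moreover have "ennreal (\<bar>c\<bar> powr p) \<noteq> 0" using assms(5) by simp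
  ultimately show ?thesis by (auto simp: ennreal_mult_less_top)
qed

lemma exists_inf_piece:
  assumes "emeasure M (space M) = \<infinity>" "finite I" "\<And>i. i \<in> I \<Longrightarrow> A i \<in> sets M"
    "(\<Union>i\<in>I. A i) = space M"
  shows "\<exists>i\<in>I. emeasure M (A i) = \<infinity>"
proof (rule ccontr)
  assume "\<not> ?thesis"
  hence "\<forall>i\<in>I. emeasure M (A i) < \<infinity>" by (auto simp: top.not_eq_extremum)
  hence "(\<Sum>i\<in>I. emeasure M (A i)) < \<infinity>" by (simp add: ennreal_sum_less_top assms(2))
  moreover have "emeasure M (space M) \<le> (\<Sum>i\<in>I. emeasure M (A i))"
    using emeasure_subadditive_finite[of I A M] assms by auto
  ultimately show False using assms(1) by simp
qed

lemma sum_indicator_at: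
  assumes "finite I" "disjoint_family_on A I" "i \<in> I" "x \<in> A i"
  shows "(\<Sum>j\<in>I. a j * indicator (A j) x) = (a i :: real)"
proof -
  have "(\<Sum>j\<in>I. a j * indicator (A j) x) = a i * indicator (A i) x + (\<Sum>j\<in>I-{i}. a j * indicator (A j) x)"
    by (rule sum.remove[OF assms(1,3)])
  also have "(\<Sum>j\<in>I-{i}. a j * indicator (A j) x) = 0"
  proof (rule sum.neutral, rule ballI)
    fix j assume "j \<in> I - {i}"
    hence "x \<notin> A j" using assms unfolding disjoint_family_on_def by blast
    thus "a j * indicator (A j) x = 0" by simp
  qed
  finally show ?thesis using assms by simp
qed

definition Ierr :: "'a measure \<Rightarrow> real \<Rightarrow> ('a \<Rightarrow> real) \<Rightarrow> ('a \<Rightarrow> real) \<Rightarrow> real" where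
  "Ierr M p f h = (\<integral>x. \<bar>f x - h x\<bar> powr p \<partial>M)"

lemma Ierr_nonneg: "0 \<le> Ierr M p f h"
  unfolding Ierr_def by (intro integral_nonneg_AE) auto

lemma powr_inv_le_iff:
  fixes x y p :: real assumes "0 \<le> x" "0 \<le> y" "0 < p"
  shows "x powr (1/p) \<le> y powr (1/p) \<longleftrightarrow> x \<le> y"
proof
  assume a: "x powr (1/p) \<le> y powr (1/p)"
  show "x \<le> y"
  proof (rule ccontr)
    assume "\<not> x \<le> y"
    hence "y powr (1/p) < x powr (1/p)" using assms by (intro powr_less_mono2) auto
    thus False using a by simp
  qed
next
  assume "x \<le> y" thus "x powr (1/p) \<le> y powr (1/p)" using assms by (intro powr_mono2) auto
qed

lemma minimizer_iff:
  assumes p: "0 < p"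
  shows "minimizer M p k f g \<longleftrightarrow> g \<in> Gpk M p k \<and> (\<forall>h\<in>Gpk M p k. Ierr M p f g \<le> Ierr M p f h)"
proof -
  have L: "Lp_norm M p (\<lambda>x. f x - h x) = Ierr M p f h powr (1/p)" for h
    by (simp add: Lp_norm_def Ierr_def)
  have bdd: "bdd_below ((\<lambda>h. Lp_norm M p (\<lambda>x. f x - h x)) ` Gpk M p k)"
    by (rule bdd_belowI2[of _ 0]) (simp add: L)
  show ?thesis
  proof
    assume m: "minimizer M p k f g"
    hence g: "g \<in> Gpk M p k" by (simp add: minimizer_def)
    show "g \<in> Gpk M p k \<and> (\<forall>h\<in>Gpk M p k. Ierr M p f g \<le> Ierr M p f h)"
    proof (intro conjI ballI g)
      fix h assume h: "h \<in> Gpk M p k"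
      have "Lp_norm M p (\<lambda>x. f x - g x) \<le> Lp_norm M p (\<lambda>x. f x - h x)"
        using m cINF_lower[OF bdd h] by (simp add: minimizer_def Dpk_def)
      thus "Ierr M p f g \<le> Ierr M p f h"
        unfolding L using powr_inv_le_iff[OF Ierr_nonneg[of M p f g] Ierr_nonneg[of M p f h] p] by simp
    qed
  next
    assume a: "g \<in> Gpk M p k \<and> (\<forall>h\<in>Gpk M p k. Ierr M p f g \<le> Ierr M p f h)"
    have "Dpk M p k f = Lp_norm M p (\<lambda>x. f x - g x)"
      unfolding Dpk_def
    proof (rule cInf_eq_minimum)
      show "Lp_norm M p (\<lambda>x. f x - g x) \<in> (\<lambda>h. Lp_norm M p (\<lambda>x. f x - h x)) ` Gpk M p k"
        using a by auto
      fix y assume "y \<in> (\<lambda>h. Lp_norm M p (\<lambda>x. f x - h x)) ` Gpk M p k"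
      then obtain h where h: "h \<in> Gpk M p k" "y = Lp_norm M p (\<lambda>x. f x - h x)" by auto
      show "Lp_norm M p (\<lambda>x. f x - g x) \<le> y"
        unfolding h L using a h powr_inv_le_iff[OF Ierr_nonneg[of M p f g] Ierr_nonneg[of M p f h] p] by auto
    qed
    thus "minimizer M p k f g" using a by (simp add: minimizer_def)
  qed
qed

lemma Gpk_mono: "k \<le> k' \<Longrightarrow> Gpk M p k \<subseteq> Gpk M p k'"
proof
  fix h assume k: "k \<le> k'" and "h \<in> Gpk M p k"
  then obtain l a A where "memLp M p h" "l \<le> k" "(\<forall>i\<in>{1..l}. A i \<in> sets M)" "disjoint_family_on A {1..l}"
        "(\<Union>i\<in>{1..l}. A i) = space M" "h = (\<lambda>x. \<Sum>i\<in>{1..l}. (a i :: real) * indicator (A i) x)"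
    unfolding Gpk_def by blast
  moreover have "l \<le> k'" using k \<open>l \<le> k\<close> by simp
  ultimately show "h \<in> Gpk M p k'" unfolding Gpk_def by blast
qed

lemma Gpk_memLp: "h \<in> Gpk M p k \<Longrightarrow> memLp M p h"
  unfolding Gpk_def by auto




definition tt :: "real \<Rightarrow> ereal \<Rightarrow> real \<Rightarrow> real" where
  "tt p e y = min (\<bar>y\<bar> powr p) (\<bar>y - real_of_ereal e\<bar> powr p)"

primrec GG :: "real \<Rightarrow> nat \<Rightarrow> (nat \<Rightarrow> ereal) \<Rightarrow> real \<Rightarrow> real" where
  "GG p 0 v y = \<bar>y\<bar> powr p"
| "GG p (Suc m) v y = min (GG p m v y) (tt p (v m) y)"

lemma tt_big:
  fixes y r p :: real
  assumes p: "0 < p" and r: "2 * \<bar>y\<bar> + 1 < \<bar>r\<bar>"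
  shows "min (\<bar>y\<bar> powr p) (\<bar>y - r\<bar> powr p) = \<bar>y\<bar> powr p"
proof -
  have "\<bar>y\<bar> \<le> \<bar>y - r\<bar>" using r by linarith
  hence "\<bar>y\<bar> powr p \<le> \<bar>y - r\<bar> powr p" using p by (intro powr_mono2) auto
  thus ?thesis by simp
qed

lemma tt_cont:
  assumes p: "0 < p" and X: "X \<longlonglongrightarrow> L"
  shows "(\<lambda>n. tt p (X n) y) \<longlonglongrightarrow> tt p L y"
proof (cases L)
  case (real r)
  have "(\<lambda>n. real_of_ereal (X n)) \<longlonglongrightarrow> r" using X real by simp
  hence "(\<lambda>n. min (\<bar>y\<bar> powr p) (\<bar>y - real_of_ereal (X n)\<bar> powr p)) \<longlonglongrightarrow> min (\<bar>y\<bar> powr p) (\<bar>y - r\<bar> powr p)"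
    using p by (auto intro!: tendsto_intros)
  thus ?thesis using real by (simp add: tt_def)
next
  case PInf
  have ev: "eventually (\<lambda>n. ereal (2 * \<bar>y\<bar> + 1) < X n) sequentially"
    using X PInf by (intro order_tendstoD(1)) auto
  have "eventually (\<lambda>n. tt p (X n) y = tt p L y) sequentially"
    using ev
  proof eventually_elim
    case (elim n)
    show ?case
    proof (cases "X n")
      case (real r)
      hence "2 * \<bar>y\<bar> + 1 < \<bar>r\<bar>" using elim by auto
      thus ?thesis using real PInf tt_big[OF p] by (simp add: tt_def)
    qed (use elim PInf in \<open>auto simp: tt_def\<close>)
  qed
  thus ?thesis by (rule tendsto_eventually)
next
  case MInf
  have ev: "eventually (\<lambda>n. X n < ereal (- (2 * \<bar>y\<bar> + 1))) sequentially"
    using X MInf by (intro order_tendstoD(2)) auto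
  have "eventually (\<lambda>n. tt p (X n) y = tt p L y) sequentially"
    using ev
  proof eventually_elim
    case (elim n)
    show ?case
    proof (cases "X n")
      case (real r)
      hence "2 * \<bar>y\<bar> + 1 < \<bar>r\<bar>" using elim by auto
      thus ?thesis using real MInf tt_big[OF p] by (simp add: tt_def)
    qed (use elim MInf in \<open>auto simp: tt_def\<close>)
  qed
  thus ?thesis by (rule tendsto_eventually)
qed

lemma GG_cont:
  assumes p: "0 < p" and X: "\<And>j. j < m \<Longrightarrow> (\<lambda>n. X n j) \<longlonglongrightarrow> L j"
  shows "(\<lambda>n. GG p m (X n) y) \<longlonglongrightarrow> GG p m L y"
  using X
proof (induction m)
  case 0 thus ?case by simp
next
  case (Suc m)
  have "(\<lambda>n. GG p m (X n) y) \<longlonglongrightarrow> GG p m L y" using Suc by auto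
  moreover have "(\<lambda>n. tt p (X n m) y) \<longlonglongrightarrow> tt p (L m) y" using Suc.prems[of m] tt_cont[OF p] by auto
  ultimately show ?case by (simp add: tendsto_min)
qed

lemma GG_nonneg: "0 \<le> GG p m v y"
  by (induction m) (auto simp: tt_def)

lemma GG_le: "GG p m v y \<le> \<bar>y\<bar> powr p"
  by (induction m) auto

lemma GG_le_tt: "j < m \<Longrightarrow> GG p m v y \<le> tt p (v j) y"
  by (induction m) (auto simp: less_Suc_eq)

lemma GG_meas:
  assumes [measurable]: "f \<in> borel_measurable M"
  shows "(\<lambda>x. GG p m v (f x)) \<in> borel_measurable M"
  by (induction m) (simp_all add: tt_def)

lemma GG_integrable:
  assumes "memLp M p f"
  shows "integrable M (\<lambda>x. GG p m v (f x))"
proof (rule Bochner_Integration.integrable_bound[where f="\<lambda>x. \<bar>f x\<bar> powr p"])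
  show "integrable M (\<lambda>x. \<bar>f x\<bar> powr p)" using assms by (simp add: memLp_def)
  show "(\<lambda>x. GG p m v (f x)) \<in> borel_measurable M" using assms by (intro GG_meas) (simp add: memLp_def)
  show "AE x in M. norm (GG p m v (f x)) \<le> norm (\<bar>f x\<bar> powr p)"
    using GG_nonneg[of p m v] GG_le[of p m v] by (intro AE_I2) auto
qed

lemma Phi_cont:
  assumes p: "0 < p" and f: "memLp M p f" and X: "\<And>j. j < m \<Longrightarrow> (\<lambda>n. X n j) \<longlonglongrightarrow> L j"
  shows "(\<lambda>n. \<integral>x. GG p m (X n) (f x) \<partial>M) \<longlonglongrightarrow> (\<integral>x. GG p m L (f x) \<partial>M)"
proof (rule integral_dominated_convergence[where w="\<lambda>x. \<bar>f x\<bar> powr p"])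
  have fm: "f \<in> borel_measurable M" using f by (simp add: memLp_def)
  show "(\<lambda>x. GG p m L (f x)) \<in> borel_measurable M" by (rule GG_meas[OF fm])
  show "(\<lambda>x. GG p m (X n) (f x)) \<in> borel_measurable M" for n by (rule GG_meas[OF fm])
  show "integrable M (\<lambda>x. \<bar>f x\<bar> powr p)" using f by (simp add: memLp_def)
  show "AE x in M. (\<lambda>n. GG p m (X n) (f x)) \<longlonglongrightarrow> GG p m L (f x)"
    using GG_cont[OF p X] by (intro AE_I2) auto
  show "AE x in M. norm (GG p m (X n) (f x)) \<le> \<bar>f x\<bar> powr p" for n
    using GG_nonneg[of p m "X n"] GG_le[of p m "X n"] by (intro AE_I2) auto
qed

lemma ereal_conv_subseq:
  fixes s :: "nat \<Rightarrow> ereal"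
  shows "\<exists>r L. strict_mono r \<and> (\<lambda>n. s (r n)) \<longlonglongrightarrow> L"
proof -
  obtain r where r: "strict_mono r" "monoseq (\<lambda>n. s (r n))" using seq_monosub by blast
  from r(2) consider "incseq (\<lambda>n. s (r n))" | "decseq (\<lambda>n. s (r n))" unfolding monoseq_iff by blast
  thus ?thesis
  proof cases
    case 1 thus ?thesis using r(1) LIMSEQ_SUP by blast
  next
    case 2 thus ?thesis using r(1) LIMSEQ_INF by blast
  qed
qed

lemma multi_subseq:
  fixes X :: "nat \<Rightarrow> nat \<Rightarrow> ereal"
  shows "\<exists>r L. strict_mono r \<and> (\<forall>j<m. (\<lambda>n. X (r n) j) \<longlonglongrightarrow> L j)"
proof (induction m)
  case 0
  have "strict_mono (id :: nat \<Rightarrow> nat)" by (simp add: strict_mono_def)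
  thus ?case by blast
next
  case (Suc m)
  then obtain r L where r: "strict_mono r" "\<forall>j<m. (\<lambda>n. X (r n) j) \<longlonglongrightarrow> L j" by blast
  obtain r' L' where r': "strict_mono r'" "(\<lambda>n. X (r (r' n)) m) \<longlonglongrightarrow> L'"
    using ereal_conv_subseq[of "\<lambda>n. X (r n) m"] by blast
  have "strict_mono (r \<circ> r')" using r(1) r'(1) by (rule strict_mono_o)
  moreover have "\<forall>j<Suc m. (\<lambda>n. X ((r \<circ> r') n) j) \<longlonglongrightarrow> (L(m := L')) j"
  proof (intro allI impI)
    fix j assume j: "j < Suc m"
    show "(\<lambda>n. X ((r \<circ> r') n) j) \<longlonglongrightarrow> (L(m := L')) j"
    proof (cases "j = m")
      case True thus ?thesis using r'(2) by simp
    next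
      case False
      hence "(\<lambda>n. X (r n) j) \<longlonglongrightarrow> L j" using r(2) j by auto
      from LIMSEQ_subseq_LIMSEQ[OF this r'(1)] show ?thesis using False by (simp add: o_def)
    qed
  qed
  ultimately show ?case by blast
qed

lemma Phi_min_exists:
  assumes p: "0 < p" and f: "memLp M p f"
  shows "\<exists>L. \<forall>v. (\<integral>x. GG p m L (f x) \<partial>M) \<le> (\<integral>x. GG p m v (f x) \<partial>M)"
proof -
  define Phi where "Phi v = (\<integral>x. GG p m v (f x) \<partial>M)" for v
  have Phi_nonneg: "0 \<le> Phi v" for v unfolding Phi_def using GG_nonneg by (intro integral_nonneg_AE) auto
  define c where "c = Inf (range Phi)"
  have bdd: "bdd_below (range Phi)" using Phi_nonneg by (intro bdd_belowI2[of _ 0]) auto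
  have "\<forall>n. \<exists>v. Phi v < c + inverse (real (Suc n))"
  proof
    fix n
    have "Inf (range Phi) < c + inverse (real (Suc n))" unfolding c_def by simp
    from cInf_lessD[OF _ this] show "\<exists>v. Phi v < c + inverse (real (Suc n))" by auto
  qed
  then obtain X where X: "\<And>n. Phi (X n) < c + inverse (real (Suc n))" by metis
  have cle: "c \<le> Phi v" for v unfolding c_def using bdd by (simp add: cInf_lower)
  have lim: "(\<lambda>n. Phi (X n)) \<longlonglongrightarrow> c"
  proof (rule tendsto_sandwich[of "\<lambda>n. c" _ _ "\<lambda>n. c + inverse (real (Suc n))"])
    show "\<forall>\<^sub>F n in sequentially. c \<le> Phi (X n)" using cle by simp
    show "\<forall>\<^sub>F n in sequentially. Phi (X n) \<le> c + inverse (real (Suc n))" using X by (intro always_eventually allI less_imp_le)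
    show "(\<lambda>n. c + inverse (real (Suc n))) \<longlonglongrightarrow> c" by (rule LIMSEQ_inverse_real_of_nat_add)
  qed simp
  obtain r L where r: "strict_mono r" "\<forall>j<m. (\<lambda>n. X (r n) j) \<longlonglongrightarrow> L j"
    using multi_subseq[where X=X and m=m] by blast
  have "(\<lambda>n. Phi (X (r n))) \<longlonglongrightarrow> Phi L" unfolding Phi_def using r(2) by (intro Phi_cont[OF p f]) auto
  moreover have "(\<lambda>n. Phi (X (r n))) \<longlonglongrightarrow> c" using LIMSEQ_subseq_LIMSEQ[OF lim r(1)] by (simp add: o_def)
  ultimately have "Phi L = c" by (rule LIMSEQ_unique)
  thus ?thesis using cle unfolding Phi_def by metis
qed




lemma nearest_step:
  fixes f :: "'a \<Rightarrow> real" and a :: "nat \<Rightarrow> real"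
  assumes fm[measurable]: "f \<in> borel_measurable M" and K: "1 \<le> K"
  shows "\<exists>A. (\<forall>i\<in>{1..K}. A i \<in> sets M) \<and> disjoint_family_on A {1..K} \<and> (\<Union>i\<in>{1..K}. A i) = space M
     \<and> (\<forall>x\<in>space M. \<exists>i\<in>{1..K}. x \<in> A i \<and> (\<forall>j\<in>{1..K}. \<bar>f x - a i\<bar> \<le> \<bar>f x - a j\<bar>))"
proof -
  define P where "P i x = (i \<in> {1..K} \<and> (\<forall>j\<in>{1..K}. \<bar>f x - a i\<bar> \<le> \<bar>f x - a j\<bar>))" for i x
  have Pex: "\<exists>i. P i x" for x
  proof -
    let ?S = "(\<lambda>i. \<bar>f x - a i\<bar>) ` {1..K}"
    have "finite ?S" "?S \<noteq> {}" using K by auto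
    hence "Min ?S \<in> ?S" by (rule Min_in)
    then obtain i where i: "i \<in> {1..K}" "\<bar>f x - a i\<bar> = Min ?S" by auto
    have "\<forall>j\<in>{1..K}. \<bar>f x - a i\<bar> \<le> \<bar>f x - a j\<bar>" using i by auto
    thus ?thesis using i unfolding P_def by blast
  qed
  have Pm[measurable]: "Measurable.pred M (P i)" for i
  proof -
    have "P i = (\<lambda>x. i \<in> {1..K} \<and> (\<forall>j. j \<in> {1..K} \<longrightarrow> \<bar>f x - a i\<bar> \<le> \<bar>f x - a j\<bar>))"
      unfolding P_def by auto
    also have "Measurable.pred M \<dots>" by measurable
    finally show ?thesis .
  qed
  define idx where "idx x = (LEAST i. P i x)" for x
  have idxm[measurable]: "idx \<in> measurable M (count_space UNIV)"
    unfolding idx_def by measurable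
  have Pidx: "P (idx x) x" for x unfolding idx_def using Pex by (rule LeastI_ex)
  define A where "A i = {x \<in> space M. idx x = i}" for i
  have "\<forall>i\<in>{1..K}. A i \<in> sets M" unfolding A_def by measurable
  moreover have "disjoint_family_on A {1..K}" unfolding A_def disjoint_family_on_def by auto
  moreover have "(\<Union>i\<in>{1..K}. A i) = space M"
    using Pidx unfolding A_def P_def by auto
  moreover have "\<forall>x\<in>space M. \<exists>i\<in>{1..K}. x \<in> A i \<and> (\<forall>j\<in>{1..K}. \<bar>f x - a i\<bar> \<le> \<bar>f x - a j\<bar>)"
    using Pidx unfolding A_def P_def by auto
  ultimately show ?thesis by blast
qed

lemma sum_ind_meas:
  assumes "\<And>i. i \<in> I \<Longrightarrow> A i \<in> sets M"
  shows "(\<lambda>x. \<Sum>i\<in>I. (a i :: real) * indicator (A i) x) \<in> borel_measurable M"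
proof (rule borel_measurable_sum)
  fix i assume "i \<in> I"
  hence [measurable]: "A i \<in> sets M" using assms by simp
  show "(\<lambda>x. a i * indicator (A i) x) \<in> borel_measurable M" by measurable
qed

lemma GG_ge:
  assumes p: "0 < p" and c: "\<forall>j\<in>{1..Suc m}. \<bar>y - c\<bar> \<le> \<bar>y - a j\<bar>" and a1: "a 1 = 0"
    and aL: "\<forall>j<m. a (j+2) = real_of_ereal (L j)" and m': "m' \<le> m"
  shows "\<bar>y - c\<bar> powr p \<le> GG p m' L y"
  using m'
proof (induction m')
  case 0
  have "1 \<in> {1..Suc m}" by simp
  hence "\<bar>y - c\<bar> \<le> \<bar>y - a 1\<bar>" using c by blast
  hence "\<bar>y - c\<bar> \<le> \<bar>y\<bar>" using a1 by simp
  thus ?case using p by (simp add: powr_mono2)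
next
  case (Suc m')
  have "1 \<in> {1..Suc m}" by simp
  hence "\<bar>y - c\<bar> \<le> \<bar>y - a 1\<bar>" using c by blast
  hence "\<bar>y - c\<bar> \<le> \<bar>y\<bar>" using a1 by simp
  hence 1: "\<bar>y - c\<bar> powr p \<le> \<bar>y\<bar> powr p" using p by (simp add: powr_mono2)
  have "m' + 2 \<in> {1..Suc m}" using Suc.prems by auto
  hence "\<bar>y - c\<bar> \<le> \<bar>y - a (m' + 2)\<bar>" using c by blast
  moreover have "a (m' + 2) = real_of_ereal (L m')" using aL Suc.prems by simp
  ultimately have "\<bar>y - c\<bar> \<le> \<bar>y - real_of_ereal (L m')\<bar>" by simp
  hence 2: "\<bar>y - c\<bar> powr p \<le> \<bar>y - real_of_ereal (L m')\<bar> powr p" using p by (simp add: powr_mono2)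
  have "\<bar>y - c\<bar> powr p \<le> GG p m' L y" using Suc by auto
  thus ?case using 1 2 by (simp add: tt_def)
qed

lemma proximinal_main:
  assumes inf: "emeasure M (space M) = \<infinity>" and p1: "1 \<le> p" and k1: "1 \<le> k"
  shows "proximinal M p k"
  unfolding proximinal_def
proof (intro allI impI)
  fix f :: "'a \<Rightarrow> real" assume f: "memLp M p f"
  have p: "0 < p" using p1 by simp
  have fm[measurable]: "f \<in> borel_measurable M" using f by (simp add: memLp_def)
  define m where "m = k - 1"
  have km: "k = Suc m" using k1 by (simp add: m_def)
  obtain L where L: "\<And>v. (\<integral>x. GG p m L (f x) \<partial>M) \<le> (\<integral>x. GG p m v (f x) \<partial>M)"
    using Phi_min_exists[OF p f, of m] by blast
  define a where "a i = (if i \<le> 1 then 0 else real_of_ereal (L (i - 2)))" for i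
  obtain A where A: "\<forall>i\<in>{1..k}. A i \<in> sets M" "disjoint_family_on A {1..k}" "(\<Union>i\<in>{1..k}. A i) = space M"
     "\<forall>x\<in>space M. \<exists>i\<in>{1..k}. x \<in> A i \<and> (\<forall>j\<in>{1..k}. \<bar>f x - a i\<bar> \<le> \<bar>f x - a j\<bar>)"
    using nearest_step[OF fm k1, of a] by blast
  define h where "h x = (\<Sum>i\<in>{1..k}. a i * indicator (A i) x)" for x
  have hm: "h \<in> borel_measurable M" unfolding h_def using A(1) by (intro sum_ind_meas) auto
  have hx: "\<exists>i\<in>{1..k}. h x = a i \<and> (\<forall>j\<in>{1..k}. \<bar>f x - a i\<bar> \<le> \<bar>f x - a j\<bar>)" if x: "x \<in> space M" for x
  proof -
    obtain i where i: "i \<in> {1..k}" "x \<in> A i" "\<forall>j\<in>{1..k}. \<bar>f x - a i\<bar> \<le> \<bar>f x - a j\<bar>" using A(4) x by blast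
    have "h x = a i" unfolding h_def using sum_indicator_at[OF _ A(2) i(1,2)] by simp
    thus ?thesis using i by blast
  qed
  have a1: "a 1 = 0" by (simp add: a_def)
  have hb: "\<bar>h x\<bar> \<le> \<bar>f x\<bar> + \<bar>f x\<bar>" if x: "x \<in> space M" for x
  proof -
    obtain i where i: "i \<in> {1..k}" "h x = a i" "\<forall>j\<in>{1..k}. \<bar>f x - a i\<bar> \<le> \<bar>f x - a j\<bar>" using hx[OF x] by blast
    have "\<bar>f x - a i\<bar> \<le> \<bar>f x - a 1\<bar>" using i k1 by auto
    thus ?thesis using i a1 by linarith
  qed
  have hLp: "memLp M p h" unfolding memLp_def
    using hm integrable_powr_bound[OF p, of M f f h] f hb by (auto simp: memLp_def)
  have hG: "h \<in> Gpk M p k" unfolding Gpk_def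
    apply (rule CollectI, rule conjI[OF hLp])
    apply (rule exI[of _ k], rule exI[of _ a], rule exI[of _ A])
    using A(1-3) by (simp add: h_def[abs_def])
  have int_h: "integrable M (\<lambda>x. \<bar>f x - h x\<bar> powr p)" by (rule memLp_diff_int[OF p f hLp])
  have IhL: "Ierr M p f h \<le> (\<integral>x. GG p m L (f x) \<partial>M)"
    unfolding Ierr_def
  proof (rule integral_mono[OF int_h GG_integrable[OF f]])
    fix x assume x: "x \<in> space M"
    obtain i where i: "i \<in> {1..k}" "h x = a i" "\<forall>j\<in>{1..k}. \<bar>f x - a i\<bar> \<le> \<bar>f x - a j\<bar>" using hx x by blast
    show "\<bar>f x - h x\<bar> powr p \<le> GG p m L (f x)"
      unfolding i(2)
    proof (rule GG_ge[where m=m and a=a, OF p])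
      show "\<forall>j\<in>{1..Suc m}. \<bar>f x - a i\<bar> \<le> \<bar>f x - a j\<bar>" using i km by simp
      show "\<forall>j<m. a (j + 2) = real_of_ereal (L j)" by (simp add: a_def)
    qed (simp_all add: a_def)
  qed
  have "Ierr M p f h \<le> Ierr M p f h'" if h': "h' \<in> Gpk M p k" for h'
  proof -
    obtain l a' A' where G: "memLp M p h'" "l \<le> k" "\<forall>i\<in>{1..l}. A' i \<in> sets M" "disjoint_family_on A' {1..l}"
        "(\<Union>i\<in>{1..l}. A' i) = space M" "h' = (\<lambda>x. \<Sum>i\<in>{1..l}. (a' i :: real) * indicator (A' i) x)"
      using h' unfolding Gpk_def by blast
    have h'x: "h' x = a' i" if "i \<in> {1..l}" "x \<in> A' i" for i x
      unfolding G(6) using sum_indicator_at[OF _ G(4) that] by simp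
    obtain i0 where i0: "i0 \<in> {1..l}" "emeasure M (A' i0) = \<infinity>"
      using exists_inf_piece[OF inf _ _ G(5)] G(3) by blast
    have a0: "a' i0 = 0"
    proof (rule ccontr)
      assume "a' i0 \<noteq> 0"
      hence "emeasure M (A' i0) < \<infinity>" using meas_finite_of_const[OF G(1) p, of "A' i0" "a' i0"] G(3) i0(1) h'x[OF i0(1)] by auto
      thus False using i0 by simp
    qed
    define v where "v j = ereal (a' (if j + 1 < i0 then j + 1 else j + 2))" for j
    have pw: "GG p m v (f x) \<le> \<bar>f x - h' x\<bar> powr p" if x: "x \<in> space M" for x
    proof -
      have "x \<in> (\<Union>i\<in>{1..l}. A' i)" using G(5) x by simp
      then obtain i where i: "i \<in> {1..l}" "x \<in> A' i" by blast
      show ?thesis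
      proof (cases "i = i0")
        case True
        thus ?thesis using h'x[OF i] a0 GG_le[of p m v "f x"] by simp
      next
        case False
        define j where "j = (if i < i0 then i - 1 else i - 2)"
        have il: "1 \<le> i" "i \<le> l" "1 \<le> i0" "i0 \<le> l" "l \<le> Suc m" using i i0 G(2) km by auto
        have j: "j < m" "(if j + 1 < i0 then j + 1 else j + 2) = i"
        proof -
          show "j < m"
          proof (cases "i < i0")
            case True thus ?thesis using il unfolding j_def by simp
          next
            case F: False thus ?thesis using il False unfolding j_def by presburger
          qed
          show "(if j + 1 < i0 then j + 1 else j + 2) = i"
          proof (cases "i < i0")
            case True thus ?thesis using il unfolding j_def by simp
          next
            case F: False thus ?thesis using il False unfolding j_def by presburger
          qed
        qed
        have "GG p m v (f x) \<le> tt p (v j) (f x)" by (rule GG_le_tt[OF j(1)])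
        also have "\<dots> \<le> \<bar>f x - a' i\<bar> powr p" unfolding tt_def v_def j(2) by simp
        finally show ?thesis using h'x[OF i] by simp
      qed
    qed
    have "(\<integral>x. GG p m v (f x) \<partial>M) \<le> Ierr M p f h'"
      unfolding Ierr_def by (rule integral_mono[OF GG_integrable[OF f] memLp_diff_int[OF p f G(1)] pw])
    thus ?thesis using IhL L[of v] by linarith
  qed
  hence "minimizer M p k f h" using minimizer_iff[OF p] hG by blast
  thus "\<exists>g. minimizer M p k f g" by blast
qed




lemma int_on_finite:
  fixes f :: "'a \<Rightarrow> real"
  assumes p: "0 < p" and f: "memLp M p f" and S: "S \<in> sets M" "emeasure M S < \<infinity>"
  shows "integrable M (\<lambda>x. indicator S x * \<bar>f x - c\<bar> powr p)"
proof -
  have fm[measurable]: "f \<in> borel_measurable M" using f by (simp add: memLp_def)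
  have Sm[measurable]: "S \<in> sets M" by fact
  have "integrable M (\<lambda>x. \<bar>indicator S x * (f x - c)\<bar> powr p)"
  proof (rule integrable_powr_bound[OF p, of M f "\<lambda>x. c * indicator S x"])
    show "integrable M (\<lambda>x. \<bar>f x\<bar> powr p)" using f by (simp add: memLp_def)
    have "(\<lambda>x. \<bar>c * indicator S x\<bar> powr p) = (\<lambda>x. \<bar>c\<bar> powr p * indicator S x)"
      using p by (auto simp: indicator_def)
    moreover have "integrable M (\<lambda>x. \<bar>c\<bar> powr p * indicator S x)"
      using integrable_real_indicator[OF S] by (rule integrable_mult_right)
    ultimately show "integrable M (\<lambda>x. \<bar>c * indicator S x\<bar> powr p)" by simp
    show "(\<lambda>x. indicator S x * (f x - c)) \<in> borel_measurable M" by measurable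
    show "\<bar>indicator S x * (f x - c)\<bar> \<le> \<bar>f x\<bar> + \<bar>c * indicator S x\<bar>" for x
      by (auto simp: indicator_def)
  qed
  moreover have "(\<lambda>x. \<bar>indicator S x * (f x - c)\<bar> powr p) = (\<lambda>x. indicator S x * \<bar>f x - c\<bar> powr p)"
    using p by (auto simp: indicator_def)
  ultimately show ?thesis by simp
qed

definition VV :: "'a measure \<Rightarrow> real \<Rightarrow> ('a \<Rightarrow> real) \<Rightarrow> 'a set \<Rightarrow> real \<Rightarrow> real" where
  "VV M p f S c = (\<integral>x. indicator S x * \<bar>f x - c\<bar> powr p \<partial>M)"

lemma is_pth_mean_VV: "is_pth_mean M p f S a \<longleftrightarrow> (\<forall>c. VV M p f S a \<le> VV M p f S c)"
  by (simp add: is_pth_mean_def set_lebesgue_integral_def VV_def)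

lemma AE_notin_meas0:
  assumes "S \<in> sets M" "AE x in M. x \<notin> S"
  shows "emeasure M S = 0"
proof -
  have "{x \<in> space M. \<not> x \<notin> S} = S" using sets.sets_into_space[OF assms(1)] by auto
  from AE_iff_measurable[OF assms(1) this] assms(2) show ?thesis by simp
qed

lemma pth_unique:
  assumes p: "1 < p" and f: "memLp M p f" and S: "S \<in> sets M" "emeasure M S < \<infinity>" "emeasure M S \<noteq> 0"
    and a: "is_pth_mean M p f S a" and a': "is_pth_mean M p f S a'"
  shows "a' = a"
proof (rule ccontr)
  assume ne: "a' \<noteq> a"
  have p0: "0 < p" using p by simp
  define m where "m = (a + a') / 2"
  have I: "integrable M (\<lambda>x. indicator S x * \<bar>f x - c\<bar> powr p)" for c by (rule int_on_finite[OF p0 f S(1,2)])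
  have V1: "VV M p f S a = VV M p f S a'" using a a' unfolding is_pth_mean_VV by (meson order_antisym)
  have V2: "VV M p f S a \<le> VV M p f S m" using a unfolding is_pth_mean_VV by blast
  define d where "d x = (indicator S x * \<bar>f x - a\<bar> powr p + indicator S x * \<bar>f x - a'\<bar> powr p) / 2
       - indicator S x * \<bar>f x - m\<bar> powr p" for x
  have dint: "integrable M d" unfolding d_def using I by auto
  have "integral\<^sup>L M d = (VV M p f S a + VV M p f S a') / 2 - VV M p f S m"
    unfolding d_def VV_def using I by simp
  hence d_le: "integral\<^sup>L M d \<le> 0" using V1 V2 by simp
  have dpos: "0 < d x" if "x \<in> S" for x
  proof -
    have "f x - m = ((f x - a) + (f x - a')) / 2" by (simp add: m_def field_simps)
    moreover have "\<bar>((f x - a) + (f x - a')) / 2\<bar> powr p < (\<bar>f x - a\<bar> powr p + \<bar>f x - a'\<bar> powr p) / 2"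
      using abs_powr_strict_mid[OF p, of "f x - a" "f x - a'"] ne by simp
    ultimately have "\<bar>f x - m\<bar> powr p < (\<bar>f x - a\<bar> powr p + \<bar>f x - a'\<bar> powr p) / 2"
      by metis
    thus ?thesis using that by (simp add: d_def)
  qed
  have dnn: "0 \<le> d x" for x
  proof (cases "x \<in> S")
    case True thus ?thesis using dpos[of x] by simp
  next
    case False thus ?thesis by (simp add: d_def)
  qed
  have "0 \<le> integral\<^sup>L M d" using dnn by (intro integral_nonneg_AE) auto
  hence "integral\<^sup>L M d = 0" using d_le by simp
  hence "AE x in M. d x = 0" using integral_nonneg_eq_0_iff_AE[OF dint] dnn by auto
  hence "AE x in M. x \<notin> S"
  proof eventually_elim
    case (elim x) show ?case using dpos[of x] elim by auto
  qed
  hence "emeasure M S = 0" by (rule AE_notin_meas0[OF S(1)])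
  thus False using S(3) by simp
qed


lemma measure_pos_of:
  assumes "emeasure M S < \<infinity>" "emeasure M S \<noteq> 0"
  shows "0 < measure M S"
proof -
  have "emeasure M S = ennreal (measure M S)" using assms(1) by (intro emeasure_eq_ennreal_measure) simp
  hence "measure M S \<noteq> 0" using assms(2) by auto
  thus ?thesis using measure_nonneg[of M S] by linarith
qed

lemma pth_mean_p1:
  assumes f: "memLp M 1 f" and S: "S \<in> sets M" "emeasure M S < \<infinity>" "emeasure M S \<noteq> 0"
    and a: "is_pth_mean M 1 f S a"
  shows "is_pth_mean M 1 f S ((Inf {a. is_pth_mean M 1 f S a} + Sup {a. is_pth_mean M 1 f S a}) / 2)"
proof -
  define P where "P = {a. is_pth_mean M 1 f S a}"
  define V where "V c = VV M 1 f S c" for c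
  have V_def': "V c = (\<integral>x. indicator S x * \<bar>f x - c\<bar> \<partial>M)" for c by (simp add: V_def VV_def)
  have I: "integrable M (\<lambda>x. indicator S x * \<bar>f x - c\<bar>)" for c
    using int_on_finite[OF _ f S(1,2), of c] by simp
  have PV: "c \<in> P \<longleftrightarrow> (\<forall>c'. V c \<le> V c')" for c unfolding P_def V_def is_pth_mean_VV by simp
  have ms: "0 < measure M S" by (rule measure_pos_of[OF S(2,3)])
  have intS: "(\<integral>x. indicator S x * c \<partial>M) = c * measure M S" for c
  proof -
    have "(\<integral>x. indicator S x * c \<partial>M) = (\<integral>x. c * indicator S x \<partial>M)" by (simp add: mult.commute)
    also have "\<dots> = c * measure M S" using sets.Int_space_eq2[OF S(1)] by (simp add: integral_indicator)
    finally show ?thesis .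
  qed
  have bnd: "\<bar>c\<bar> \<le> 2 * V 0 / measure M S" if c: "c \<in> P" for c
  proof -
    have "V c \<le> V 0" using c PV by blast
    have "(\<integral>x. indicator S x * \<bar>c\<bar> \<partial>M) \<le> (\<integral>x. indicator S x * \<bar>f x - c\<bar> + indicator S x * \<bar>f x - 0\<bar> \<partial>M)"
    proof (rule integral_mono[OF integrable_mult_left[OF integrable_real_indicator[OF S(1,2)]]
                               Bochner_Integration.integrable_add[OF I I]])
      fix x show "indicator S x * \<bar>c\<bar> \<le> indicator S x * \<bar>f x - c\<bar> + indicator S x * \<bar>f x - 0\<bar>"
        by (auto simp: indicator_def)
    qed
    also have "\<dots> = V c + V 0" unfolding V_def' by (rule Bochner_Integration.integral_add[OF I I])
    finally have "(\<integral>x. indicator S x * \<bar>c\<bar> \<partial>M) \<le> V c + V 0" .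
    hence "\<bar>c\<bar> * measure M S \<le> V c + V 0" by (simp only: intS)
    hence "\<bar>c\<bar> * measure M S \<le> 2 * V 0" using \<open>V c \<le> V 0\<close> by simp
    thus ?thesis using ms by (simp add: field_simps)
  qed
  have aP: "a \<in> P" using a by (simp add: P_def)
  have ne: "P \<noteq> {}" using aP by blast
  have bb: "bdd_below P" "bdd_above P"
  proof -
    show "bdd_below P"
    proof (rule bdd_belowI)
      fix c assume "c \<in> P" thus "- (2 * V 0 / measure M S) \<le> c" using bnd[of c] by linarith
    qed
    show "bdd_above P"
    proof (rule bdd_aboveI)
      fix c assume "c \<in> P" thus "c \<le> 2 * V 0 / measure M S" using bnd[of c] by linarith
    qed
  qed
  define m where "m = (Inf P + Sup P) / 2"
  have "m \<in> P"
  proof (cases "Inf P = Sup P")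
    case True
    have "Inf P \<le> a" "a \<le> Sup P" using cInf_lower[OF aP bb(1)] cSup_upper[OF aP bb(2)] by auto
    hence "m = a" using True by (simp add: m_def)
    thus ?thesis using aP by simp
  next
    case False
    have "Inf P \<le> Sup P" using cInf_lower[OF aP bb(1)] cSup_upper[OF aP bb(2)] by auto
    hence lt: "Inf P < m" "m < Sup P" using False by (auto simp: m_def)
    obtain a1 where a1: "a1 \<in> P" "a1 < m" using cInf_lessD[OF ne lt(1)] by blast
    obtain a2 where a2: "a2 \<in> P" "m < a2" using less_cSupD[OF ne lt(2)] by blast
    define t where "t = (a2 - m) / (a2 - a1)"
    have a12: "a1 < a2" using a1 a2 by simp
    have t0: "0 \<le> t" unfolding t_def using a1 a2 by (intro divide_nonneg_pos) auto
    have t1: "t \<le> 1" unfolding t_def using a1 a2 by (subst divide_le_eq_1_pos) auto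
    have tt: "t * (a2 - a1) = a2 - m" unfolding t_def using a12 by simp
    have tt2: "t * a2 - t * a1 = a2 - m" using tt by (simp add: right_diff_distrib)
    have tt3: "(1 - t) * a2 = a2 - t * a2" by (simp add: left_diff_distrib)
    have t: "0 \<le> t" "t \<le> 1" "m = t * a1 + (1 - t) * a2" using t0 t1 tt2 tt3 by linarith+
    have pw: "\<bar>y - m\<bar> \<le> t * \<bar>y - a1\<bar> + (1 - t) * \<bar>y - a2\<bar>" for y
    proof -
      have "y - m = t * (y - a1) + (1 - t) * (y - a2)" using t(3) by (simp add: algebra_simps)
      hence "\<bar>y - m\<bar> \<le> \<bar>t * (y - a1)\<bar> + \<bar>(1 - t) * (y - a2)\<bar>" by (metis abs_triangle_ineq)
      thus ?thesis using t(1,2) by (simp add: abs_mult)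
    qed
    have Ic: "integrable M (\<lambda>x. t * (indicator S x * \<bar>f x - a1\<bar>) + (1 - t) * (indicator S x * \<bar>f x - a2\<bar>))"
      by (rule Bochner_Integration.integrable_add[OF integrable_mult_right[OF I] integrable_mult_right[OF I]])
    have "V m \<le> (\<integral>x. t * (indicator S x * \<bar>f x - a1\<bar>) + (1 - t) * (indicator S x * \<bar>f x - a2\<bar>) \<partial>M)"
      unfolding V_def'
    proof (rule integral_mono[OF I Ic])
      fix x show "indicator S x * \<bar>f x - m\<bar> \<le> t * (indicator S x * \<bar>f x - a1\<bar>) + (1 - t) * (indicator S x * \<bar>f x - a2\<bar>)"
        using pw[of "f x"] by (auto simp: indicator_def)
    qed
    also have "\<dots> = t * V a1 + (1 - t) * V a2" unfolding V_def'
      by (subst Bochner_Integration.integral_add[OF integrable_mult_right[OF I] integrable_mult_right[OF I]]) simp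
    also have "V a1 = V a2" using a1(1) a2(1) PV by (meson order_antisym)
    finally have "V m \<le> V a2" by (simp add: algebra_simps)
    thus ?thesis using a2(1) PV by (meson order_trans)
  qed
  thus ?thesis unfolding m_def P_def by simp
qed

lemma Mp_mean:
  assumes p1: "1 \<le> p" and f: "memLp M p f" and S: "S \<in> sets M" "emeasure M S < \<infinity>" "emeasure M S \<noteq> 0"
    and a: "is_pth_mean M p f S a"
  shows "is_pth_mean M p f S (Mp M p f S)"
proof (cases "1 < p")
  case True
  have "(THE a. is_pth_mean M p f S a) = a"
  proof (rule the_equality)
    show "is_pth_mean M p f S a" by (rule a)
    fix a' assume "is_pth_mean M p f S a'" thus "a' = a" by (rule pth_unique[OF True f S a])
  qed
  thus ?thesis using True S(3) a by (simp add: Mp_def)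
next
  case False
  hence p: "p = 1" using p1 by simp
  show ?thesis using pth_mean_p1[OF f[unfolded p] S a[unfolded p]] S(3) p by (simp add: Mp_def)
qed




lemma sum_indicator_at2:
  assumes "finite I" "disjoint_family_on A I" "i \<in> I" "x \<in> A i"
  shows "(\<Sum>j\<in>I. indicator (A j) x * F j) = (F i :: real)"
  using sum_indicator_at[OF assms, of F] by (simp add: mult.commute)

locale S2 =
  fixes M :: "'a measure" and p :: real and k :: nat and f :: "'a \<Rightarrow> real" and q :: nat
    and b :: "nat \<Rightarrow> real" and A :: "nat \<Rightarrow> 'a set"
  assumes inf: "emeasure M (space M) = \<infinity>" and p1: "1 \<le> p" and fL: "memLp M p f" and qk: "q \<le> k"
    and bm: "strict_mono_on {1..q} b"
    and As: "\<forall>i\<in>{1..q}. A i \<in> sets M \<and> emeasure M (A i) > 0"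
    and Ad: "disjoint_family_on A {1..q}" and Au: "(\<Union>i\<in>{1..q}. A i) = space M"
    and gmin: "minimizer M p k f (\<lambda>x. \<Sum>i\<in>{1..q}. b i * indicator (A i) x)"
begin

abbreviation C where "C \<equiv> Cset M q b f"

definition gA where "gA x = (\<Sum>i\<in>{1..q}. b i * indicator (A i) x)"
definition gB where "gB x = (\<Sum>i\<in>{1..q}. b i * indicator (C i) x)"

lemma p0: "0 < p" using p1 by simp

lemma fm[measurable]: "f \<in> borel_measurable M" using fL by (simp add: memLp_def)

lemma g_eq: "gA = (\<lambda>x. \<Sum>i\<in>{1..q}. b i * indicator (A i) x)" by (simp add: gA_def[abs_def])

lemma g_min: "gA \<in> Gpk M p k" "\<And>h. h \<in> Gpk M p k \<Longrightarrow> Ierr M p f gA \<le> Ierr M p f h"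
  using gmin[folded g_eq] unfolding minimizer_iff[OF p0] by auto

lemma g_memLp: "memLp M p gA" using g_min(1) by (rule Gpk_memLp)

lemma gx: "i \<in> {1..q} \<Longrightarrow> x \<in> A i \<Longrightarrow> gA x = b i"
  unfolding gA_def using sum_indicator_at[OF _ Ad] by simp

lemma space_cover: "x \<in> space M \<Longrightarrow> \<exists>i\<in>{1..q}. x \<in> A i"
  using Au by auto

lemma q1: "1 \<le> q"
proof (rule ccontr)
  assume "\<not> 1 \<le> q"
  hence "q = 0" by simp
  hence "space M = {}" using Au by simp
  thus False using inf by simp
qed

lemma ex_s: "\<exists>s\<in>{1..q}. b s = 0"
proof -
  obtain i where i: "i \<in> {1..q}" "emeasure M (A i) = \<infinity>"
    using exists_inf_piece[OF inf _ _ Au] As by auto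
  have "b i = 0"
  proof (rule ccontr)
    assume "b i \<noteq> 0"
    hence "emeasure M (A i) < \<infinity>" using meas_finite_of_const[OF g_memLp p0, of "A i" "b i"] As i gx by auto
    thus False using i by simp
  qed
  thus ?thesis using i by blast
qed

lemma b_inj: "i \<in> {1..q} \<Longrightarrow> j \<in> {1..q} \<Longrightarrow> b i = b j \<Longrightarrow> i = j"
  using strict_mono_on_eqD[OF bm] by metis

lemma b_less: "i \<in> {1..q} \<Longrightarrow> j \<in> {1..q} \<Longrightarrow> i < j \<Longrightarrow> b i < b j"
  using strict_mono_onD[OF bm] by blast

lemma b_mono: "i \<in> {1..q} \<Longrightarrow> j \<in> {1..q} \<Longrightarrow> i \<le> j \<Longrightarrow> b i \<le> b j"
  using b_less by (cases "i = j") (auto simp: less_le)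

lemma thr_mid: "2 \<le> i \<Longrightarrow> i \<le> q \<Longrightarrow> thr q b i = ereal ((b (i - 1) + b i) / 2)"
  by (simp add: thr_def)

lemma thr_mono: "i \<le> j \<Longrightarrow> thr q b i \<le> thr q b j"
proof -
  assume ij: "i \<le> j"
  show ?thesis
  proof (cases "i \<le> 1 \<or> q + 1 \<le> j")
    case True thus ?thesis using ij by (auto simp: thr_def)
  next
    case False
    hence i2: "2 \<le> i" "j \<le> q" by auto
    have "b (i - 1) \<le> b (j - 1)" "b i \<le> b j" using i2 ij by (auto intro!: b_mono)
    thus ?thesis using i2 ij by (simp add: thr_mid)
  qed
qed

lemma thr_1: "thr q b 1 = - \<infinity>" by (simp add: thr_def)
lemma thr_q: "thr q b (Suc q) = \<infinity>" using q1 by (simp add: thr_def)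

lemma C_sets[measurable]: "C i \<in> sets M"
  unfolding Cset_def by measurable

lemma C_space: "C i \<subseteq> space M" unfolding Cset_def by auto

lemma C_cover: "x \<in> space M \<Longrightarrow> \<exists>i\<in>{1..q}. x \<in> C i"
proof -
  assume x: "x \<in> space M"
  define y where "y = ereal (f x)"
  define I where "I = {i \<in> {1..q}. thr q b i \<le> y}"
  have fin: "finite I" unfolding I_def by simp
  have "1 \<in> I" using q1 by (simp add: I_def thr_def)
  hence ne: "I \<noteq> {}" by blast
  define i where "i = Max I"
  have iI: "i \<in> I" unfolding i_def using Max_in[OF fin ne] .
  have "y < thr q b (Suc i)"
  proof (cases "Suc i \<le> q")
    case True
    hence "Suc i \<notin> I" using Max_ge[OF fin, of "Suc i"] unfolding i_def by auto
    thus ?thesis using True unfolding I_def by auto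
  next
    case False
    hence "i = q" using iI unfolding I_def by auto
    thus ?thesis by (simp add: thr_q y_def)
  qed
  hence "x \<in> C i" using iI x unfolding Cset_def I_def y_def by auto
  thus ?thesis using iI unfolding I_def by blast
qed

lemma C_disj: "disjoint_family_on C {1..q}"
  unfolding disjoint_family_on_def
proof (intro ballI impI)
  have *: "C i \<inter> C j = {}" if ij: "i < j" for i j
  proof -
    have "thr q b (Suc i) \<le> thr q b j" using ij by (intro thr_mono) simp
    thus ?thesis unfolding Cset_def by (auto dest: order.strict_trans2)
  qed
  fix i j assume "i \<in> {1..q}" "j \<in> {1..q}" "i \<noteq> j"
  thus "C i \<inter> C j = {}" using *[of i j] *[of j i] by (cases "i < j") auto
qed

lemma C_union: "(\<Union>i\<in>{1..q}. C i) = space M"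
  using C_cover C_space by blast

lemma near:
  assumes i: "i \<in> {1..q}" and j: "j \<in> {1..q}" and x: "x \<in> C i"
  shows "\<bar>f x - b i\<bar> \<le> \<bar>f x - b j\<bar>"
proof -
  consider "j = i" | "i < j" | "j < i" by linarith
  thus ?thesis
  proof cases
    case 1 thus ?thesis by simp
  next
    case 2
    have s: "Suc i \<in> {1..q}" using 2 i j by auto
    have "ereal (f x) < thr q b (Suc i)" using x by (simp add: Cset_def)
    also have "thr q b (Suc i) = ereal ((b i + b (Suc i)) / 2)" using s i thr_mid[of "Suc i"] by simp
    finally have "f x < (b i + b (Suc i)) / 2" by simp
    moreover have "b (Suc i) \<le> b j" using s j 2 by (intro b_mono) auto
    moreover have "b i < b j" using i j 2 by (rule b_less)
    ultimately show ?thesis by (simp add: abs_if; linarith)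
  next
    case 3
    have s: "i - 1 \<in> {1..q}" "2 \<le> i" "i \<le> q" using 3 i j by auto
    have "thr q b i \<le> ereal (f x)" using x by (simp add: Cset_def)
    hence "(b (i - 1) + b i) / 2 \<le> f x" using s by (simp add: thr_mid)
    moreover have "b j \<le> b (i - 1)" using s j 3 by (intro b_mono) auto
    moreover have "b j < b i" using j i 3 by (rule b_less)
    ultimately show ?thesis by (simp add: abs_if; linarith)
  qed
qed

lemma gBx: "i \<in> {1..q} \<Longrightarrow> x \<in> C i \<Longrightarrow> gB x = b i"
  unfolding gB_def using sum_indicator_at[OF _ C_disj] by simp

lemma gB_better: "x \<in> space M \<Longrightarrow> \<bar>f x - gB x\<bar> \<le> \<bar>f x - gA x\<bar>"
proof -
  assume x: "x \<in> space M"
  obtain i where i: "i \<in> {1..q}" "x \<in> C i" using C_cover[OF x] by blast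
  obtain j where j: "j \<in> {1..q}" "x \<in> A j" using space_cover[OF x] by blast
  show ?thesis using near[OF i(1) j(1) i(2)] gBx[OF i] gx[OF j] by simp
qed

lemma gB_meas: "gB \<in> borel_measurable M"
  unfolding gB_def[abs_def] by (rule sum_ind_meas) simp

lemma gB_memLp: "memLp M p gB"
proof -
  have "integrable M (\<lambda>x. \<bar>gB x\<bar> powr p)"
  proof (rule integrable_powr_bound[OF p0, of M f "\<lambda>x. f x - gA x"])
    show "integrable M (\<lambda>x. \<bar>f x\<bar> powr p)" using fL by (simp add: memLp_def)
    show "integrable M (\<lambda>x. \<bar>f x - gA x\<bar> powr p)" by (rule memLp_diff_int[OF p0 fL g_memLp])
    show "gB \<in> borel_measurable M" by (rule gB_meas)
    fix x assume "x \<in> space M"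
    thus "\<bar>gB x\<bar> \<le> \<bar>f x\<bar> + \<bar>f x - gA x\<bar>" using gB_better[of x] by linarith
  qed
  thus ?thesis using gB_meas by (simp add: memLp_def)
qed

lemma gB_G: "q \<le> k' \<Longrightarrow> gB \<in> Gpk M p k'"
  unfolding Gpk_def
  apply (rule CollectI, rule conjI[OF gB_memLp])
  apply (rule exI[of _ q], rule exI[of _ b], rule exI[of _ C])
  using C_disj C_union by (simp add: gB_def[abs_def])

lemma gB_le_g: "Ierr M p f gB \<le> Ierr M p f gA"
  unfolding Ierr_def
proof (rule integral_mono[OF memLp_diff_int[OF p0 fL gB_memLp] memLp_diff_int[OF p0 fL g_memLp]])
  fix x assume "x \<in> space M"
  thus "\<bar>f x - gB x\<bar> powr p \<le> \<bar>f x - gA x\<bar> powr p" using gB_better p0 by (intro powr_mono2) auto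
qed

lemma gB_opt: "h \<in> Gpk M p k \<Longrightarrow> Ierr M p f gB \<le> Ierr M p f h"
  using gB_le_g g_min(2)[of h] by linarith

end


locale S3 = S2 + fixes s assumes s: "s \<in> {1..q}" and bs: "b s = 0"
begin

lemma thr_s: "thr q b s < 0 \<and> 0 < thr q b (Suc s)"
proof
  show "thr q b s < 0"
  proof (cases "s \<le> 1")
    case True thus ?thesis by (simp add: thr_def)
  next
    case False
    hence s2: "2 \<le> s" "s \<le> q" "s - 1 \<in> {1..q}" using s by auto
    have "b (s - 1) < b s" using s2(3) s False by (intro b_less) auto
    thus ?thesis using s2 bs by (simp add: thr_mid)
  qed
  show "0 < thr q b (Suc s)"
  proof (cases "Suc s \<le> q")
    case False thus ?thesis using s by (simp add: thr_def)
  next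
    case True
    have "b s < b (Suc s)" using s True by (intro b_less) auto
    thus ?thesis using True s bs thr_mid[of "Suc s"] by simp
  qed
qed

lemma C_fin: "i \<in> {1..q} \<Longrightarrow> i \<noteq> s \<Longrightarrow> emeasure M (C i) < \<infinity>"
proof -
  assume i: "i \<in> {1..q}" "i \<noteq> s"
  have "b i \<noteq> 0" using b_inj[OF i(1) s] bs i(2) by auto
  thus ?thesis using meas_finite_of_const[OF gB_memLp p0 C_sets, of i "b i"] gBx[OF i(1)] by blast
qed

definition gc :: "(nat \<Rightarrow> real) \<Rightarrow> 'a \<Rightarrow> real" where "gc c x = (\<Sum>i\<in>{1..q}. c i * indicator (C i) x)"

lemma gcx: assumes "i \<in> {1..q}" "x \<in> C i" shows "gc c x = c i"
  unfolding gc_def by (rule sum_indicator_at[OF finite_atLeastAtMost C_disj assms])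

lemma gc_memLp:
  assumes cs: "c s = 0"
  shows "memLp M p (gc c)"
proof -
  have meas: "gc c \<in> borel_measurable M" unfolding gc_def[abs_def] by (rule sum_ind_meas) simp
  have int: "integrable M (\<lambda>x. \<Sum>i\<in>{1..q}. \<bar>c i\<bar> powr p * indicator (C i) x)"
  proof (rule Bochner_Integration.integrable_sum)
    fix i assume i: "i \<in> {1..q}"
    show "integrable M (\<lambda>x. \<bar>c i\<bar> powr p * indicator (C i) x)"
    proof (cases "i = s")
      case True thus ?thesis using cs by simp
    next
      case False
      show ?thesis by (rule integrable_mult_right[OF integrable_real_indicator[OF C_sets C_fin[OF i False]]])
    qed
  qed
  have eq: "\<bar>gc c x\<bar> powr p = (\<Sum>i\<in>{1..q}. \<bar>c i\<bar> powr p * indicator (C i) x)" if x: "x \<in> space M" for x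
  proof -
    obtain i where i: "i \<in> {1..q}" "x \<in> C i" using C_cover[OF x] by blast
    have e1: "gc c x = c i" by (rule gcx[OF i])
    have e2: "(\<Sum>j\<in>{1..q}. \<bar>c j\<bar> powr p * indicator (C j) x) = \<bar>c i\<bar> powr p"
      by (rule sum_indicator_at[OF finite_atLeastAtMost C_disj i])
    show ?thesis unfolding e1 e2 ..
  qed
  have "integrable M (\<lambda>x. \<bar>gc c x\<bar> powr p)"
    using int by (subst Bochner_Integration.integrable_cong[OF refl eq])
  thus ?thesis using meas by (simp add: memLp_def)
qed

lemma gc_G: "c s = 0 \<Longrightarrow> q \<le> k' \<Longrightarrow> gc c \<in> Gpk M p k'"
  unfolding Gpk_def
  apply (rule CollectI, rule conjI[OF gc_memLp], assumption)
  apply (rule exI[of _ q], rule exI[of _ c], rule exI[of _ C])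
  using C_disj C_union by (simp add: gc_def[abs_def])

lemma VV_term:
  assumes cs: "c s = 0" and i: "i \<in> {1..q}"
  shows "integrable M (\<lambda>x. indicator (C i) x * (\<bar>f x - c i\<bar> powr p - \<bar>f x - b i\<bar> powr p))"
    "(\<integral>x. indicator (C i) x * (\<bar>f x - c i\<bar> powr p - \<bar>f x - b i\<bar> powr p) \<partial>M)
       = VV M p f (C i) (c i) - VV M p f (C i) (b i)"
proof -
  have "integrable M (\<lambda>x. indicator (C i) x * (\<bar>f x - c i\<bar> powr p - \<bar>f x - b i\<bar> powr p)) \<and>
    (\<integral>x. indicator (C i) x * (\<bar>f x - c i\<bar> powr p - \<bar>f x - b i\<bar> powr p) \<partial>M)
       = VV M p f (C i) (c i) - VV M p f (C i) (b i)"
  proof (cases "i = s")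
    case True thus ?thesis using cs bs by simp
  next
    case False
    have I1: "integrable M (\<lambda>x. indicator (C i) x * \<bar>f x - c i\<bar> powr p)"
      by (rule int_on_finite[OF p0 fL C_sets C_fin[OF i False]])
    have I2: "integrable M (\<lambda>x. indicator (C i) x * \<bar>f x - b i\<bar> powr p)"
      by (rule int_on_finite[OF p0 fL C_sets C_fin[OF i False]])
    have eq: "(\<lambda>x. indicator (C i) x * (\<bar>f x - c i\<bar> powr p - \<bar>f x - b i\<bar> powr p))
       = (\<lambda>x. indicator (C i) x * \<bar>f x - c i\<bar> powr p - indicator (C i) x * \<bar>f x - b i\<bar> powr p)"
      by (simp add: right_diff_distrib)
    show ?thesis unfolding eq VV_def
      using Bochner_Integration.integrable_diff[OF I1 I2] Bochner_Integration.integral_diff[OF I1 I2] by simp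
  qed
  thus "integrable M (\<lambda>x. indicator (C i) x * (\<bar>f x - c i\<bar> powr p - \<bar>f x - b i\<bar> powr p))"
    "(\<integral>x. indicator (C i) x * (\<bar>f x - c i\<bar> powr p - \<bar>f x - b i\<bar> powr p) \<partial>M)
       = VV M p f (C i) (c i) - VV M p f (C i) (b i)" by auto
qed

lemma gc_Ierr:
  assumes cs: "c s = 0"
  shows "Ierr M p f (gc c) = Ierr M p f gB + (\<Sum>i\<in>{1..q}. VV M p f (C i) (c i) - VV M p f (C i) (b i))"
proof -
  define T where "T i x = indicator (C i) x * (\<bar>f x - c i\<bar> powr p - \<bar>f x - b i\<bar> powr p)" for i x
  have TI: "\<And>i. i \<in> {1..q} \<Longrightarrow> integrable M (T i)" unfolding T_def[abs_def] using VV_term(1)[where c=c, OF cs] by blast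
  have TV: "\<And>i. i \<in> {1..q} \<Longrightarrow> integral\<^sup>L M (T i) = VV M p f (C i) (c i) - VV M p f (C i) (b i)"
    unfolding T_def[abs_def] using VV_term(2)[where c=c, OF cs] by blast
  have pw: "\<bar>f x - gc c x\<bar> powr p = \<bar>f x - gB x\<bar> powr p + (\<Sum>i\<in>{1..q}. T i x)" if x: "x \<in> space M" for x
  proof -
    obtain i where i: "i \<in> {1..q}" "x \<in> C i" using C_cover[OF x] by blast
    have "(\<Sum>i\<in>{1..q}. T i x) = \<bar>f x - c i\<bar> powr p - \<bar>f x - b i\<bar> powr p"
      unfolding T_def by (rule sum_indicator_at2[OF _ C_disj i]) simp
    thus ?thesis using gcx[OF i, of c] gBx[OF i] by simp
  qed
  have IB: "integrable M (\<lambda>x. \<bar>f x - gB x\<bar> powr p)" by (rule memLp_diff_int[OF p0 fL gB_memLp])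
  have IT: "integrable M (\<lambda>x. \<Sum>i\<in>{1..q}. T i x)" by (rule Bochner_Integration.integrable_sum) (rule TI)
  have "Ierr M p f (gc c) = (\<integral>x. \<bar>f x - gB x\<bar> powr p + (\<Sum>i\<in>{1..q}. T i x) \<partial>M)"
    unfolding Ierr_def by (rule Bochner_Integration.integral_cong[OF refl pw])
  also have "\<dots> = Ierr M p f gB + (\<integral>x. (\<Sum>i\<in>{1..q}. T i x) \<partial>M)"
    unfolding Ierr_def by (rule Bochner_Integration.integral_add[OF IB IT])
  also have "(\<integral>x. (\<Sum>i\<in>{1..q}. T i x) \<partial>M) = (\<Sum>i\<in>{1..q}. integral\<^sup>L M (T i))"
    by (rule Bochner_Integration.integral_sum) (rule TI)
  also have "\<dots> = (\<Sum>i\<in>{1..q}. VV M p f (C i) (c i) - VV M p f (C i) (b i))"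
    by (rule sum.cong[OF refl TV])
  finally show ?thesis .
qed

lemma pth_b:
  assumes i: "i \<in> {1..q}" "i \<noteq> s"
  shows "is_pth_mean M p f (C i) (b i)"
proof (rule ccontr)
  assume "\<not> is_pth_mean M p f (C i) (b i)"
  then obtain c0 where c0: "VV M p f (C i) c0 < VV M p f (C i) (b i)" unfolding is_pth_mean_VV by (auto simp: not_le)
  define c where "c = b(i := c0)"
  have cs: "c s = 0" using bs i(2) by (simp add: c_def)
  have "(\<Sum>j\<in>{1..q}. VV M p f (C j) (c j) - VV M p f (C j) (b j))
     = (VV M p f (C i) (c i) - VV M p f (C i) (b i)) + (\<Sum>j\<in>{1..q} - {i}. VV M p f (C j) (c j) - VV M p f (C j) (b j))"
    by (rule sum.remove[OF _ i(1)]) simp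
  also have "(\<Sum>j\<in>{1..q} - {i}. VV M p f (C j) (c j) - VV M p f (C j) (b j)) = 0"
    by (rule sum.neutral) (auto simp: c_def)
  finally have "(\<Sum>j\<in>{1..q}. VV M p f (C j) (c j) - VV M p f (C j) (b j)) < 0"
    using c0 by (simp add: c_def)
  hence "Ierr M p f (gc c) < Ierr M p f gB" using gc_Ierr[where c=c, OF cs] by simp
  moreover have "Ierr M p f gB \<le> Ierr M p f (gc c)" by (rule gB_opt[OF gc_G[where c=c, OF cs qk]])
  ultimately show False by simp
qed

definition ct where "ct i = (if i = s then 0 else Mp M p f (C i))" 

lemma VV_null:
  assumes "S \<in> sets M" "emeasure M S = 0"
  shows "VV M p f S c = 0"
proof -
  have "AE x in M. x \<notin> S" by (rule AE_not_in) (use assms in \<open>simp add: null_sets_def\<close>)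
  hence "AE x in M. indicator S x * \<bar>f x - c\<bar> powr p = 0" by eventually_elim simp
  thus ?thesis unfolding VV_def by (rule integral_eq_zero_AE)
qed

lemma ct_Ierr: "Ierr M p f (gc ct) = Ierr M p f gB"
proof -
  have cs: "ct s = 0" by (simp add: ct_def)
  have "VV M p f (C i) (ct i) - VV M p f (C i) (b i) = 0" if i: "i \<in> {1..q}" for i
  proof (cases "i = s")
    case True thus ?thesis using bs by (simp add: ct_def)
  next
    case False
    show ?thesis
    proof (cases "emeasure M (C i) = 0")
      case True thus ?thesis using VV_null[OF C_sets] by simp
    next
      case ne: False
      have m1: "is_pth_mean M p f (C i) (b i)" by (rule pth_b[OF i False])
      have m2: "is_pth_mean M p f (C i) (Mp M p f (C i))"
        by (rule Mp_mean[OF p1 fL C_sets C_fin[OF i False] ne m1])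
      have "VV M p f (C i) (Mp M p f (C i)) = VV M p f (C i) (b i)"
        using m1 m2 unfolding is_pth_mean_VV by (meson order_antisym)
      thus ?thesis using False by (simp add: ct_def)
    qed
  qed
  thus ?thesis using gc_Ierr[where c=ct, OF cs] by simp
qed

lemma ct_min: "q \<le> k' \<Longrightarrow> k' \<le> k \<Longrightarrow> minimizer M p k' f (gc ct)"
  unfolding minimizer_iff[OF p0]
proof (intro conjI ballI)
  assume qk': "q \<le> k'" and kk: "k' \<le> k"
  show "gc ct \<in> Gpk M p k'" by (rule gc_G) (simp_all add: ct_def qk')
  fix h assume "h \<in> Gpk M p k'"
  hence "h \<in> Gpk M p k" using Gpk_mono[OF kk] by blast
  thus "Ierr M p f (gc ct) \<le> Ierr M p f h" using gB_opt ct_Ierr by simp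
qed

lemma Cs_inf: "emeasure M (C s) = \<infinity>"
proof -
  obtain i where i: "i \<in> {1..q}" "emeasure M (C i) = \<infinity>"
    using exists_inf_piece[OF inf _ _ C_union] C_sets by blast
  have "i = s" using C_fin[OF i(1)] i(2) by (cases "i = s") auto
  thus ?thesis using i by simp
qed

lemma least_pos:
  assumes L: "q = (LEAST n. \<exists>g'. minimizer M p k f g' \<and> card (g' ` space M) = n)"
  shows "\<forall>i\<in>{1..q}. 0 < emeasure M (C i)"
proof (intro ballI, rule ccontr)
  fix i assume i: "i \<in> {1..q}" and "\<not> 0 < emeasure M (C i)"
  hence z: "emeasure M (C i) = 0" by (simp add: not_gr_zero)
  have iS: "i \<noteq> s" using Cs_inf z by auto
  have img: "gc ct ` space M \<subseteq> ct ` ({1..q} - {i})"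
  proof
    fix y assume "y \<in> gc ct ` space M"
    then obtain x where x: "x \<in> space M" "y = gc ct x" by blast
    obtain j where j: "j \<in> {1..q}" "x \<in> C j" using C_cover[OF x(1)] by blast
    show "y \<in> ct ` ({1..q} - {i})"
    proof (cases "j = i")
      case True
      have "ct i = ct s" using z iS by (simp add: ct_def Mp_def)
      moreover have "s \<in> {1..q} - {i}" using s iS by simp
      ultimately show ?thesis using x gcx[OF j, of ct] True by auto
    next
      case False thus ?thesis using x gcx[OF j, of ct] j by auto
    qed
  qed
  have "card (gc ct ` space M) \<le> card (ct ` ({1..q} - {i}))"
    by (rule card_mono[OF _ img]) simp
  also have "\<dots> \<le> card ({1..q} - {i})" by (rule card_image_le) simp
  also have "\<dots> = q - 1" using i by simp
  finally have c: "card (gc ct ` space M) \<le> q - 1" .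
  have "(LEAST n. \<exists>g'. minimizer M p k f g' \<and> card (g' ` space M) = n) \<le> card (gc ct ` space M)"
    by (rule Least_le) (use ct_min[OF qk order_refl] in blast)
  thus False using L c q1 by linarith
qed

end


theorem theorem2p10:
  fixes M :: "'a measure" and p :: real and k :: nat
  assumes "emeasure M (space M) = \<infinity>" and "1 \<le> p" and "1 \<le> k"
  shows "proximinal M p k \<and>
    (\<forall>f q b A. memLp M p f \<longrightarrow> q \<le> k \<longrightarrow> strict_mono_on {1..q} b
       \<longrightarrow> (\<forall>i\<in>{1..q}. A i \<in> sets M \<and> emeasure M (A i) > 0)
       \<longrightarrow> disjoint_family_on A {1..q} \<longrightarrow> (\<Union>i\<in>{1..q}. A i) = space M
       \<longrightarrow> minimizer M p k f (\<lambda>x. \<Sum>i\<in>{1..q}. b i * indicator (A i) x)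
       \<longrightarrow> (\<exists>!s. s \<in> {1..q} \<and> b s = 0) \<and>
           (\<forall>s\<in>{1..q}. b s = 0 \<longrightarrow>
              thr q b s < 0 \<and> 0 < thr q b (Suc s)
            \<and> (\<forall>i\<in>{1..q}. i \<noteq> s \<longrightarrow> emeasure M (Cset M q b f i) < \<infinity>)
            \<and> (\<forall>i\<in>{1..q}. i \<noteq> s \<longrightarrow> emeasure M (Cset M q b f i) > 0
                  \<longrightarrow> is_pth_mean M p f (Cset M q b f i) (b i))
            \<and> minimizer M p q f (\<lambda>x. \<Sum>i\<in>{1..q}.
                  (if i = s then 0 else Mp M p f (Cset M q b f i)) * indicator (Cset M q b f i) x)
            \<and> (q = (LEAST n. \<exists>g'. minimizer M p k f g' \<and> card (g' ` space M) = n)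
                  \<longrightarrow> (\<forall>i\<in>{1..q}. emeasure M (Cset M q b f i) > 0))))"
  apply (rule conjI)
   apply (rule proximinal_main[OF assms])
  apply (intro allI impI)
  subgoal premises prems for f q b A
  proof -
    interpret S2 M p k f q b A by (rule S2.intro[OF assms(1) assms(2) prems])
    obtain s0 where s0: "s0 \<in> {1..q}" "b s0 = 0" using ex_s by blast
    show ?thesis
      apply (rule conjI)
      subgoal
        apply (rule ex1I[of _ s0])
        subgoal using s0 by simp
        subgoal for y using s0 b_inj[of y s0] by simp
        done
      apply (intro ballI impI)
      subgoal premises sp for s
      proof -
        interpret S3 M p k f q b A s by (rule S3.intro[OF S2_axioms S3_axioms.intro[where q=q and b=b and s=s, OF sp]])
        have mq: "minimizer M p q f (\<lambda>x. \<Sum>i\<in>{1..q}.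
                  (if i = s then 0 else Mp M p f (Cset M q b f i)) * indicator (Cset M q b f i) x)"
          using ct_min[OF order_refl qk] unfolding gc_def[abs_def] ct_def .
        show ?thesis
          apply (intro conjI)
          using thr_s apply blast
          using thr_s apply blast
          using C_fin apply blast
          using pth_b apply blast
          using mq apply blast
          using least_pos apply blast
          done
      qed
      done
  qed
  done

end
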